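(* Let $\Gamma$ be a connected finite simple graph on $N\ge3$ vertices with minimum degree $d=2$ and $\varepsilon=\frac12$. Then there exist two adjacent vertices $u\sim v$ with $\deg u=\deg v=2$.
   Context: For a finite simple graph $\Gamma=(V,E)$ without isolated vertices, $\deg v$ is the number of neighbours of $v$ and $\mathcal N(v)=\{w\in V: w\sim v\}$. The normalized Laplacian acts on functions $f:V\to\mathbb R$ by $\Delta f(v)=f(v)-\frac{1}{\deg v}\sum_{w\sim v}f(w)$; its eigenvalues are $0=\lambda_1\le\lambda_2\le\dots\le\lambda_N$, and $\varepsilon:=\min_i|1-\lambda_i|$. $d$ denotes the minimum vertex degree. *)

theory Defs
  imports Main "HOL-Analysis.Analysis"
begin

definition simple_graph :: "'a set \<Rightarrow> ('a \<Rightarrow> 'a \<Rightarrow> bool) \<Rightarrow> bool" where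
  "simple_graph V E \<longleftrightarrow> finite V \<and> (\<forall>u v. E u v \<longrightarrow> u \<in> V \<and> v \<in> V)
     \<and> (\<forall>u v. E u v \<longrightarrow> E v u) \<and> (\<forall>v. \<not> E v v)"

definition nbhd :: "'a set \<Rightarrow> ('a \<Rightarrow> 'a \<Rightarrow> bool) \<Rightarrow> 'a \<Rightarrow> 'a set" where
  "nbhd V E v = {w \<in> V. E v w}"

definition deg :: "'a set \<Rightarrow> ('a \<Rightarrow> 'a \<Rightarrow> bool) \<Rightarrow> 'a \<Rightarrow> nat" where
  "deg V E v = card (nbhd V E v)"

definition connected_graph :: "'a set \<Rightarrow> ('a \<Rightarrow> 'a \<Rightarrow> bool) \<Rightarrow> bool" where
  "connected_graph V E \<longleftrightarrow> V \<noteq> {} \<and> (\<forall>u\<in>V. \<forall>v\<in>V. E\<^sup>*\<^sup>* u v)"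

definition min_degree :: "'a set \<Rightarrow> ('a \<Rightarrow> 'a \<Rightarrow> bool) \<Rightarrow> nat" where
  "min_degree V E = Min (deg V E ` V)"

definition norm_laplacian :: "'a set \<Rightarrow> ('a \<Rightarrow> 'a \<Rightarrow> bool) \<Rightarrow> ('a \<Rightarrow> real) \<Rightarrow> 'a \<Rightarrow> real" where
  "norm_laplacian V E f v = f v - (\<Sum>w\<in>nbhd V E v. f w) / real (deg V E v)"

definition laplacian_eigenvalues :: "'a set \<Rightarrow> ('a \<Rightarrow> 'a \<Rightarrow> bool) \<Rightarrow> real set" where
  "laplacian_eigenvalues V E = {mu. \<exists>f. (\<exists>v\<in>V. f v \<noteq> 0) \<and>
      (\<forall>v\<in>V. norm_laplacian V E f v = mu * f v)}"

definition eps_gap :: "'a set \<Rightarrow> ('a \<Rightarrow> 'a \<Rightarrow> bool) \<Rightarrow> real" where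
  "eps_gap V E = Min ((\<lambda>mu. \<bar>1 - mu\<bar>) ` laplacian_eigenvalues V E)"

end

theory Submission
  imports Defs
begin

lemma compact_box:
  fixes V :: "'a set"
  shows "compact {g::'a\<Rightarrow>real. \<forall>x. g x \<in> (if x \<in> V then {-1..1} else {0})}"
proof -
  have "compactin (product_topology (\<lambda>i. euclidean) UNIV)
          (PiE UNIV (\<lambda>x::'a. if x \<in> V then {-1..(1::real)} else {0}))"
    by (subst compactin_PiE) auto
  moreover have "PiE UNIV (\<lambda>x::'a. if x \<in> V then {-1..(1::real)} else {0})
      = {g::'a\<Rightarrow>real. \<forall>x. g x \<in> (if x \<in> V then {-1..1} else {0})}"
    by (simp add: PiE_UNIV_domain Pi_def)
  ultimately show ?thesis
    by (simp add: euclidean_product_topology compactin_euclidean_iff)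
qed

lemma cont_coord [continuous_intros]: "continuous_on S (\<lambda>g::'a\<Rightarrow>real. g x)"
  by (rule continuous_on_subset[OF continuous_on_product_coordinates]) simp

lemma quad_zero:
  fixes b q :: real
  assumes "\<And>t. 0 \<le> 2*t*b + t^2*q"
  shows "b = 0"
proof (rule ccontr)
  assume b: "b \<noteq> 0"
  define c where "c = \<bar>q\<bar> + 1"
  have c: "c > 0" "q < 2*c" unfolding c_def by auto
  define t where "t = - b / c"
  have "2*t*b + t^2*q = b^2 * (q - 2*c) / c^2"
    unfolding t_def using c by (simp add: field_simps power2_eq_square)
  also have "\<dots> < 0" using b c by (intro divide_neg_pos mult_pos_neg) auto
  finally show False using assms[of t] by simp
qed

locale G =
  fixes V :: "'a set" and E :: "'a \<Rightarrow> 'a \<Rightarrow> bool"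
  assumes sg: "simple_graph V E"
    and dpos: "\<And>x. x \<in> V \<Longrightarrow> deg V E x > 0"
begin

definition d :: "'a \<Rightarrow> real" where "d x = real (deg V E x)"
definition Pm :: "('a \<Rightarrow> real) \<Rightarrow> 'a \<Rightarrow> real" where
  "Pm f x = (\<Sum>y\<in>nbhd V E x. f y) / d x"
definition nrm :: "('a \<Rightarrow> real) \<Rightarrow> real" where
  "nrm f = (\<Sum>x\<in>V. d x * (f x)^2)"
definition Q :: "('a \<Rightarrow> real) \<Rightarrow> real" where
  "Q f = (\<Sum>x\<in>V. d x * (Pm f x)^2) - nrm f / 4"

lemma finV: "finite V" using sg unfolding simple_graph_def by auto
lemma Ein: "E u v \<Longrightarrow> u \<in> V \<and> v \<in> V" using sg unfolding simple_graph_def by auto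
lemma Esym: "E u v \<Longrightarrow> E v u" using sg unfolding simple_graph_def by auto
lemma nb_sub: "nbhd V E x \<subseteq> V" unfolding nbhd_def by auto
lemma fin_nb: "finite (nbhd V E x)" using finV nb_sub finite_subset by blast
lemma d_pos: "x \<in> V \<Longrightarrow> d x > 0" using dpos unfolding d_def by auto
lemma d_nz: "x \<in> V \<Longrightarrow> d x \<noteq> 0" using d_pos[of x] by simp
lemma d_ge1: "x \<in> V \<Longrightarrow> d x \<ge> 1" using dpos unfolding d_def by (simp add: Suc_leI)
lemma dsq: "x \<in> V \<Longrightarrow> 0 \<le> d x * y^2" using d_pos[of x] by simp
lemma nrm_ge0: "nrm f \<ge> 0" unfolding nrm_def using d_pos
  by (intro sum_nonneg) (simp add: less_imp_le)

lemma Pm_lin: "Pm (\<lambda>y. f y + t * h y) x = Pm f x + t * Pm h x"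
  unfolding Pm_def by (simp add: sum.distrib sum_distrib_left add_divide_distrib)

lemma Pm_cong: "(\<And>y. y \<in> V \<Longrightarrow> f y = g y) \<Longrightarrow> Pm f x = Pm g x"
  unfolding Pm_def using nb_sub by (intro arg_cong2[where f="(/)"] sum.cong) auto

lemma Pm_scale: "Pm (\<lambda>y. c * f y) x = c * Pm f x"
  unfolding Pm_def by (simp add: sum_distrib_left)

definition F :: "real \<Rightarrow> ('a \<Rightarrow> real) \<Rightarrow> real" where
  "F c u = (\<Sum>x\<in>V. d x * (Pm u x)^2) - c * nrm u"
definition B :: "real \<Rightarrow> ('a \<Rightarrow> real) \<Rightarrow> ('a \<Rightarrow> real) \<Rightarrow> real" where
  "B c f h = (\<Sum>x\<in>V. d x * Pm f x * Pm h x) - c * (\<Sum>x\<in>V. d x * f x * h x)"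

lemma F_expand: "F c (\<lambda>y. f y + t * h y) = F c f + 2 * t * B c f h + t^2 * F c h"
  unfolding F_def B_def nrm_def Pm_lin
  by (simp add: power2_eq_square algebra_simps sum.distrib sum_distrib_left sum_subtractf)


definition dl :: "'a \<Rightarrow> 'a \<Rightarrow> real" where "dl x = (\<lambda>y. if y = x then 1 else 0)"

lemma nb_iff: "y \<in> nbhd V E x \<longleftrightarrow> E x y"
  unfolding nbhd_def using Ein by auto

lemma sum_nb_sym:
  "(\<Sum>y\<in>V. if x \<in> nbhd V E y then g y else 0) = (\<Sum>y\<in>nbhd V E x. g y)"
proof -
  have "(\<Sum>y\<in>nbhd V E x. g y) = (\<Sum>y\<in>V. if E x y then g y else 0)"
    unfolding nbhd_def using finV by (simp add: sum.inter_filter)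
  also have "\<dots> = (\<Sum>y\<in>V. if x \<in> nbhd V E y then g y else 0)"
    by (intro sum.cong refl) (auto simp: nb_iff dest: Esym)
  finally show ?thesis by simp
qed

lemma Pm_dl: "y \<in> V \<Longrightarrow> d y * Pm f y * Pm (dl x) y = (if x \<in> nbhd V E y then Pm f y else 0)"
  using d_pos[of y] fin_nb[of y] unfolding Pm_def dl_def
  by (simp add: sum.delta)

lemma dPm: "x \<in> V \<Longrightarrow> d x * Pm g x = (\<Sum>y\<in>nbhd V E x. g y)"
  using d_pos[of x] unfolding Pm_def by simp

lemma B_dl: "x \<in> V \<Longrightarrow> B c f (dl x) = d x * Pm (Pm f) x - c * d x * f x"
proof -
  assume x: "x \<in> V"
  have "(\<Sum>y\<in>V. d y * Pm f y * Pm (dl x) y) = (\<Sum>y\<in>V. if x \<in> nbhd V E y then Pm f y else 0)"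
    by (intro sum.cong refl) (simp add: Pm_dl)
  also have "\<dots> = d x * Pm (Pm f) x" using x by (simp add: sum_nb_sym dPm)
  finally have 1: "(\<Sum>y\<in>V. d y * Pm f y * Pm (dl x) y) = d x * Pm (Pm f) x" .
  have 2: "(\<Sum>y\<in>V. d y * f y * dl x y) = d x * f x"
    using x finV unfolding dl_def by (simp add: if_distrib cong: if_cong)
  show ?thesis unfolding B_def 1 2 by simp
qed


lemma nrm0: "nrm u = 0 \<Longrightarrow> x \<in> V \<Longrightarrow> u x = 0"
proof -
  assume n: "nrm u = 0" and x: "x \<in> V"
  have "\<forall>y\<in>V. d y * (u y)^2 = 0"
    using n finV d_pos unfolding nrm_def
    by (subst sum_nonneg_eq_0_iff[symmetric]) (auto intro: dsq)
  then show "u x = 0" using x d_pos[of x] by auto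
qed

lemma Pm0: "(\<And>y. y \<in> V \<Longrightarrow> u y = 0) \<Longrightarrow> Pm u x = 0"
proof -
  assume "\<And>y. y \<in> V \<Longrightarrow> u y = 0"
  then have "Pm u x = Pm (\<lambda>_. 0) x" by (intro Pm_cong) auto
  then show ?thesis unfolding Pm_def by simp
qed

lemma Q0: "nrm u = 0 \<Longrightarrow> Q u = 0"
proof -
  assume n: "nrm u = 0"
  have "\<And>x. x \<in> V \<Longrightarrow> Pm u x = 0" using nrm0[OF n] by (intro Pm0) auto
  then show ?thesis unfolding Q_def n by simp
qed

definition nz :: "('a \<Rightarrow> real) \<Rightarrow> 'a \<Rightarrow> real" where
  "nz u = (\<lambda>y. if y \<in> V then u y / sqrt (nrm u) else 0)"

lemma nz_props:
  assumes n: "nrm u > 0"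
  shows "nrm (nz u) = 1" "\<And>c. F c (nz u) = F c u / nrm u"
proof -
  define s where "s = sqrt (nrm u)"
  have s: "s > 0" "s^2 = nrm u" unfolding s_def using n by auto
  have Pmz: "Pm (nz u) x = (1/s) * Pm u x" for x
  proof -
    have "Pm (nz u) x = Pm (\<lambda>y. (1/s) * u y) x"
      by (intro Pm_cong) (simp add: nz_def s_def)
    then show ?thesis using Pm_scale[of "1/s" u x] by simp
  qed
  have "nrm (nz u) = (\<Sum>x\<in>V. d x * (u x)^2 / s^2)"
    unfolding nz_def s_def nrm_def by (intro sum.cong) (auto simp: power_divide)
  also have "\<dots> = (\<Sum>x\<in>V. d x * (u x)^2) / s^2" by (simp add: sum_divide_distrib)
  finally have "nrm (nz u) = (\<Sum>x\<in>V. d x * (u x)^2) / s^2" .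
  then show 1: "nrm (nz u) = 1" using s n unfolding nrm_def by simp
  fix c
  have "(\<Sum>x\<in>V. d x * (Pm (nz u) x)^2) = (\<Sum>x\<in>V. d x * (Pm u x)^2) / s^2"
    unfolding Pmz by (simp add: sum_divide_distrib power_divide)
  then show "F c (nz u) = F c u / nrm u"
    unfolding F_def 1 using s n by (simp add: field_simps)
qed

lemma Q_F: "Q u = F (1/4) u" unfolding Q_def F_def by simp

lemma nlap: "norm_laplacian V E g x = g x - Pm g x"
  unfolding norm_laplacian_def Pm_def d_def by simp

lemma exists_small_eig:
  assumes g0: "Q g0 < 0"
  shows "\<exists>\<mu>\<in>laplacian_eigenvalues V E. \<bar>1 - \<mu>\<bar> < 1/2"
proof -
  define K where "K = {g::'a\<Rightarrow>real. \<forall>x. g x \<in> (if x \<in> V then {-1..1} else {0})} \<inter> {g. nrm g = 1}"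
  have contn: "continuous_on UNIV nrm" unfolding nrm_def
    by (intro continuous_intros)
  have cK: "compact K" unfolding K_def
    by (intro compact_Int_closed compact_box closed_Collect_eq contn continuous_intros)
  have contQ: "continuous_on K Q" unfolding Q_def Pm_def nrm_def
    by (intro continuous_intros) (auto simp: d_nz)
  have nz_in: "nz u \<in> K" if n: "nrm u > 0" for u
  proof -
    have 1: "nrm (nz u) = 1" using nz_props[OF n] by simp
    have bd: "\<bar>nz u x\<bar> \<le> 1" if x: "x \<in> V" for x
    proof -
      have "d x * (nz u x)^2 \<le> nrm (nz u)" unfolding nrm_def
        using x finV by (intro member_le_sum) (auto intro: dsq)
      moreover have "(nz u x)^2 \<le> d x * (nz u x)^2"
        using mult_right_mono[of 1 "d x" "(nz u x)^2"] d_ge1[OF x] by simp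
      ultimately have "(nz u x)^2 \<le> 1" using 1 by linarith
      then show ?thesis by (simp add: abs_square_le_1)
    qed
    have "\<forall>x. nz u x \<in> (if x \<in> V then {-1..1} else {0})"
    proof
      fix x show "nz u x \<in> (if x \<in> V then {-1..1} else {0})"
      proof (cases "x \<in> V")
        case True
        then have "\<bar>nz u x\<bar> \<le> 1" by (rule bd)
        then show ?thesis using True by (simp add: abs_le_iff)
      next
        case False then show ?thesis by (simp add: nz_def)
      qed
    qed
    then show ?thesis unfolding K_def using 1 by simp
  qed
  have n0: "nrm g0 > 0"
  proof (rule ccontr)
    assume "\<not> nrm g0 > 0"
    then have "nrm g0 = 0" using nrm_ge0[of g0] by simp
    then show False using Q0 g0 by simp
  qed
  then have "K \<noteq> {}" using nz_in by blast
  then obtain f where fK: "f \<in> K" and fmin: "\<And>g. g \<in> K \<Longrightarrow> Q f \<le> Q g"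
    using continuous_attains_inf[OF cK _ contQ] by blast
  define m where "m = Q f"
  have "Q (nz g0) = Q g0 / nrm g0" unfolding Q_F using nz_props(2)[OF n0] by simp
  also have "\<dots> < 0" using g0 n0 by (simp add: divide_neg_pos)
  finally have m0: "m < 0" using fmin[OF nz_in[OF n0]] unfolding m_def by simp
  have nf: "nrm f = 1" using fK unfolding K_def by simp
  define c where "c = 1/4 + m"
  have Fc: "F c u = Q u - m * nrm u" for u unfolding F_def Q_def c_def by (simp add: algebra_simps)
  have key: "F c u \<ge> 0" for u
  proof (cases "nrm u = 0")
    case True then show ?thesis unfolding Fc using Q0 by simp
  next
    case False
    then have n: "nrm u > 0" using nrm_ge0[of u] by simp
    have "m \<le> Q (nz u)" unfolding m_def by (rule fmin[OF nz_in[OF n]])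
    also have "Q (nz u) = Q u / nrm u" unfolding Q_F using nz_props(2)[OF n] by simp
    finally have "m * nrm u \<le> Q u" using n by (simp add: pos_le_divide_eq)
    then show ?thesis unfolding Fc by simp
  qed
  have Ff: "F c f = 0" unfolding Fc nf m_def by simp
  have eig2: "Pm (Pm f) x = c * f x" if x: "x \<in> V" for x
  proof -
    have "0 \<le> 2 * t * B c f (dl x) + t^2 * F c (dl x)" for t
    proof -
      have "F c (\<lambda>y. f y + t * dl x y) = 2 * t * B c f (dl x) + t^2 * F c (dl x)"
        using F_expand[of c f t "dl x"] Ff by simp
      then show ?thesis using key[of "\<lambda>y. f y + t * dl x y"] by simp
    qed
    then have "B c f (dl x) = 0" by (rule quad_zero)
    then have "d x * (Pm (Pm f) x - c * f x) = 0" using B_dl[OF x] by (simp add: algebra_simps)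
    then show ?thesis using d_pos[OF x] by simp
  qed
  have c0: "c \<ge> 0"
  proof -
    have "(\<Sum>x\<in>V. d x * (Pm f x)^2) \<ge> 0"
      by (intro sum_nonneg) (auto intro: dsq)
    then show ?thesis using Ff nf unfolding F_def by simp
  qed
  have c4: "c < 1/4" unfolding c_def using m0 by simp
  define s where "s = sqrt c"
  have "sqrt c < sqrt (1/4)" by (rule real_sqrt_less_mono) (use c4 in simp)
  then have s: "s\<^sup>2 = c" "s \<ge> 0" "s < 1/2" unfolding s_def using c0
    by (auto simp: real_sqrt_divide)
  define g where "g = (\<lambda>y. Pm f y + s * f y)"
  have Pg: "Pm g x = s * g x" if x: "x \<in> V" for x
    unfolding g_def Pm_lin eig2[OF x] s(1)[symmetric] by (simp add: algebra_simps power2_eq_square)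
  show ?thesis
  proof (cases "\<exists>x\<in>V. g x \<noteq> 0")
    case True
    have "1 - s \<in> laplacian_eigenvalues V E"
      unfolding laplacian_eigenvalues_def using True
      by (intro CollectI exI[of _ g]) (auto simp: nlap Pg algebra_simps)
    moreover have "\<bar>1 - (1 - s)\<bar> < 1/2" using s by simp
    ultimately show ?thesis by blast
  next
    case False
    then have Pf: "Pm f x = - s * f x" if "x \<in> V" for x using that unfolding g_def by auto
    have "\<exists>x\<in>V. f x \<noteq> 0"
    proof (rule ccontr)
      assume "\<not> (\<exists>x\<in>V. f x \<noteq> 0)"
      then have "nrm f = 0" unfolding nrm_def by simp
      then show False using nf by simp
    qed
    then have "1 + s \<in> laplacian_eigenvalues V E"
      unfolding laplacian_eigenvalues_def
      by (intro CollectI exI[of _ f]) (auto simp: nlap Pf algebra_simps)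
    moreover have "\<bar>1 - (1 + s)\<bar> < 1/2" using s by simp
    ultimately show ?thesis by blast
  qed
qed

end
context G begin
definition ip :: "('a \<Rightarrow> real) \<Rightarrow> ('a \<Rightarrow> real) \<Rightarrow> real" where
  "ip f g = (\<Sum>y\<in>V. d y * f y * g y)"

lemma sum_dl: "x \<in> V \<Longrightarrow> (\<Sum>y\<in>V. d y * dl x y * g y) = d x * g x"
proof -
  assume x: "x \<in> V"
  have "(\<Sum>y\<in>V. d y * dl x y * g y) = (\<Sum>y\<in>V. if y = x then d x * g x else 0)"
    by (intro sum.cong) (auto simp: dl_def)
  also have "\<dots> = d x * g x" using x finV by simp
  finally show ?thesis .
qed

lemma bessel:
  assumes S: "finite S" and on: "\<And>\<mu> \<nu>. \<mu> \<in> S \<Longrightarrow> \<nu> \<in> S \<Longrightarrow> ip (e \<mu>) (e \<nu>) = (if \<mu> = \<nu> then 1 else 0)"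
    and x: "x \<in> V"
  shows "(\<Sum>\<mu>\<in>S. d x * (e \<mu> x)^2) \<le> 1"
proof -
  define c where "c \<mu> = d x * e \<mu> x" for \<mu>
  define u where "u y = dl x y - (\<Sum>\<mu>\<in>S. c \<mu> * e \<mu> y)" for y
  have t1: "(\<Sum>y\<in>V. d y * (dl x y)^2) = d x"
  proof -
    have "(\<Sum>y\<in>V. d y * (dl x y)^2) = (\<Sum>y\<in>V. d y * dl x y)"
      by (intro sum.cong) (auto simp: dl_def)
    also have "\<dots> = d x" using x finV unfolding dl_def by (simp add: if_distrib cong: if_cong)
    finally show ?thesis .
  qed
  have t2: "(\<Sum>y\<in>V. d y * dl x y * (\<Sum>\<mu>\<in>S. c \<mu> * e \<mu> y)) = (\<Sum>\<mu>\<in>S. (c \<mu>)^2)"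
  proof -
    have "(\<Sum>y\<in>V. d y * dl x y * (\<Sum>\<mu>\<in>S. c \<mu> * e \<mu> y)) = d x * (\<Sum>\<mu>\<in>S. c \<mu> * e \<mu> x)"
      by (rule sum_dl[OF x])
    also have "\<dots> = (\<Sum>\<mu>\<in>S. (c \<mu>)^2)"
      unfolding sum_distrib_left c_def by (simp add: power2_eq_square algebra_simps)
    finally show ?thesis .
  qed
  have t3: "(\<Sum>y\<in>V. d y * (\<Sum>\<mu>\<in>S. c \<mu> * e \<mu> y)^2) = (\<Sum>\<mu>\<in>S. (c \<mu>)^2)"
  proof -
    have "(\<Sum>y\<in>V. d y * (\<Sum>\<mu>\<in>S. c \<mu> * e \<mu> y)^2)
        = (\<Sum>y\<in>V. \<Sum>\<mu>\<in>S. \<Sum>\<nu>\<in>S. c \<mu> * c \<nu> * (d y * e \<mu> y * e \<nu> y))"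
      by (simp add: power2_eq_square sum_product sum_distrib_left algebra_simps)
    also have "\<dots> = (\<Sum>\<mu>\<in>S. \<Sum>\<nu>\<in>S. c \<mu> * c \<nu> * ip (e \<mu>) (e \<nu>))"
      unfolding ip_def sum_distrib_left
      by (subst sum.swap) (simp add: sum.swap[of _ V])
    also have "\<dots> = (\<Sum>\<mu>\<in>S. \<Sum>\<nu>\<in>S. if \<mu> = \<nu> then c \<mu> * c \<nu> else 0)"
      by (intro sum.cong refl) (simp add: on)
    also have "\<dots> = (\<Sum>\<mu>\<in>S. (c \<mu>)^2)" using S by (simp add: power2_eq_square)
    finally show ?thesis .
  qed
  have "0 \<le> nrm u" by (rule nrm_ge0)
  also have "nrm u = (\<Sum>y\<in>V. d y * (dl x y)^2) - 2 * (\<Sum>y\<in>V. d y * dl x y * (\<Sum>\<mu>\<in>S. c \<mu> * e \<mu> y))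
      + (\<Sum>y\<in>V. d y * (\<Sum>\<mu>\<in>S. c \<mu> * e \<mu> y)^2)"
    unfolding nrm_def u_def
    by (simp add: power2_diff sum.distrib sum_subtractf sum_distrib_left algebra_simps)
  finally have "(\<Sum>\<mu>\<in>S. (c \<mu>)^2) \<le> d x" unfolding t1 t2 t3 by simp
  then have "d x * (\<Sum>\<mu>\<in>S. d x * (e \<mu> x)^2) \<le> d x * 1"
    unfolding c_def by (simp add: sum_distrib_left power2_eq_square algebra_simps)
  then show ?thesis using d_pos[OF x] by (simp only: mult_le_cancel_left_pos)
qed
end
context G begin

lemma sum_adj: "x \<in> V \<Longrightarrow> (\<Sum>y\<in>nbhd V E x. h y) = (\<Sum>y\<in>V. if E x y then h y else 0)"
  unfolding nbhd_def using finV by (simp add: sum.inter_filter)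

lemma sa: "(\<Sum>x\<in>V. d x * f x * Pm g x) = (\<Sum>x\<in>V. d x * Pm f x * g x)"
proof -
  have L: "(\<Sum>x\<in>V. d x * f x * Pm g x) = (\<Sum>x\<in>V. \<Sum>y\<in>V. if E x y then f x * g y else 0)"
  proof (intro sum.cong refl)
    fix x assume x: "x \<in> V"
    have "d x * f x * Pm g x = f x * (d x * Pm g x)" by simp
    also have "\<dots> = f x * (\<Sum>y\<in>V. if E x y then g y else 0)" using x by (simp add: dPm sum_adj)
    also have "\<dots> = (\<Sum>y\<in>V. if E x y then f x * g y else 0)"
      by (simp add: sum_distrib_left if_distrib cong: if_cong)
    finally show "d x * f x * Pm g x = (\<Sum>y\<in>V. if E x y then f x * g y else 0)" .
  qed
  have R: "(\<Sum>x\<in>V. d x * Pm f x * g x) = (\<Sum>x\<in>V. \<Sum>y\<in>V. if E x y then f y * g x else 0)"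
  proof (intro sum.cong refl)
    fix x assume x: "x \<in> V"
    have "d x * Pm f x = (\<Sum>y\<in>V. if E x y then f y else 0)" using x by (simp add: dPm sum_adj)
    then have "d x * Pm f x * g x = (\<Sum>y\<in>V. (if E x y then f y else 0) * g x)"
      by (simp add: sum_distrib_right)
    also have "\<dots> = (\<Sum>y\<in>V. if E x y then f y * g x else 0)"
      by (intro sum.cong refl) simp
    finally show "d x * Pm f x * g x = (\<Sum>y\<in>V. if E x y then f y * g x else 0)" .
  qed
  have "(\<Sum>x\<in>V. \<Sum>y\<in>V. if E x y then f y * g x else 0) = (\<Sum>y\<in>V. \<Sum>x\<in>V. if E x y then f y * g x else 0)"
    by (rule sum.swap)
  also have "\<dots> = (\<Sum>y\<in>V. \<Sum>x\<in>V. if E y x then f y * g x else 0)"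
    by (intro sum.cong refl) (auto dest: Esym)
  finally show ?thesis unfolding L R by simp
qed

lemma eig_orth:
  assumes "t1 \<noteq> t2" "\<And>x. x \<in> V \<Longrightarrow> Pm f x = t1 * f x" "\<And>x. x \<in> V \<Longrightarrow> Pm g x = t2 * g x"
  shows "ip f g = 0"
proof -
  have "(\<Sum>x\<in>V. d x * f x * Pm g x) = t2 * ip f g"
    unfolding ip_def sum_distrib_left using assms(3) by (intro sum.cong refl) simp
  moreover have "(\<Sum>x\<in>V. d x * Pm f x * g x) = t1 * ip f g"
    unfolding ip_def sum_distrib_left using assms(2) by (intro sum.cong refl) simp
  ultimately have "(t2 - t1) * ip f g = 0" using sa[of f g] by (simp add: algebra_simps)
  then show ?thesis using assms(1) by simp
qed

lemma Pm_nz: "Pm (nz u) x = (1 / sqrt (nrm u)) * Pm u x"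
proof -
  have "Pm (nz u) x = Pm (\<lambda>y. (1 / sqrt (nrm u)) * u y) x"
    by (intro Pm_cong) (simp add: nz_def)
  then show ?thesis using Pm_scale[of "1 / sqrt (nrm u)" u x] by simp
qed

lemma eig_vec:
  assumes "\<mu> \<in> laplacian_eigenvalues V E"
  shows "\<exists>e. nrm e = 1 \<and> (\<forall>x\<in>V. Pm e x = (1 - \<mu>) * e x)"
proof -
  obtain f v where v: "v \<in> V" "f v \<noteq> 0" and ev: "\<And>x. x \<in> V \<Longrightarrow> norm_laplacian V E f x = \<mu> * f x"
    using assms unfolding laplacian_eigenvalues_def by blast
  have Pf: "Pm f x = (1 - \<mu>) * f x" if "x \<in> V" for x using ev[OF that] unfolding nlap
    by (simp add: algebra_simps)
  have "0 < d v * (f v)^2" using v d_pos[of v] by simp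
  also have "d v * (f v)^2 \<le> nrm f" unfolding nrm_def
    using v finV by (intro member_le_sum) (auto intro: dsq)
  finally have n: "nrm f > 0" .
  have "Pm (nz f) x = (1 - \<mu>) * nz f x" if x: "x \<in> V" for x
    unfolding Pm_nz Pf[OF x] using x by (simp add: nz_def)
  then show ?thesis using nz_props(1)[OF n] by blast
qed

lemma card_eig_le:
  assumes S: "finite S" "S \<subseteq> laplacian_eigenvalues V E"
  shows "card S \<le> card V"
proof -
  have "\<forall>\<mu>\<in>laplacian_eigenvalues V E. \<exists>e. nrm e = 1 \<and> (\<forall>x\<in>V. Pm e x = (1 - \<mu>) * e x)"
    using eig_vec by blast
  then obtain e where e: "\<And>\<mu>. \<mu> \<in> laplacian_eigenvalues V E \<Longrightarrow> nrm (e \<mu>) = 1 \<and> (\<forall>x\<in>V. Pm (e \<mu>) x = (1 - \<mu>) * e \<mu> x)"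
    by metis
  have on: "ip (e \<mu>) (e \<nu>) = (if \<mu> = \<nu> then 1 else 0)" if "\<mu> \<in> S" "\<nu> \<in> S" for \<mu> \<nu>
  proof (cases "\<mu> = \<nu>")
    case True
    then show ?thesis using e[of \<mu>] that S unfolding ip_def nrm_def
      by (auto simp: power2_eq_square mult.assoc)
  next
    case False
    then have "ip (e \<mu>) (e \<nu>) = 0" using e[of \<mu>] e[of \<nu>] that S
      by (intro eig_orth[of "1 - \<mu>" "1 - \<nu>"]) auto
    then show ?thesis using False by simp
  qed
  have "(\<Sum>x\<in>V. \<Sum>\<mu>\<in>S. d x * (e \<mu> x)^2) \<le> (\<Sum>x\<in>V. 1)"
    by (intro sum_mono bessel[OF S(1) on]) auto
  also have "(\<Sum>x\<in>V. \<Sum>\<mu>\<in>S. d x * (e \<mu> x)^2) = (\<Sum>\<mu>\<in>S. nrm (e \<mu>))"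
    unfolding nrm_def by (rule sum.swap)
  also have "\<dots> = (\<Sum>\<mu>\<in>S. 1)" using e S by (intro sum.cong refl) auto
  finally show ?thesis by simp
qed

lemma eig_finite: "finite (laplacian_eigenvalues V E)"
proof (rule ccontr)
  assume "infinite (laplacian_eigenvalues V E)"
  then obtain S where "finite S" "card S = Suc (card V)" "S \<subseteq> laplacian_eigenvalues V E"
    using infinite_arbitrarily_large by blast
  then show False using card_eig_le by fastforce
qed

end
context G begin

lemma perturb:
  assumes Qf: "Q f \<le> 0" and x: "x \<in> V" and ne: "Pm (Pm f) x \<noteq> f x / 4"
  shows "\<exists>g. Q g < 0"
proof (rule ccontr)
  assume "\<not> (\<exists>g. Q g < 0)"
  then have Qg: "Q g \<ge> 0" for g by (meson not_le)
  have "0 \<le> 2 * t * B (1/4) f (dl x) + t^2 * F (1/4) (dl x)" for t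
  proof -
    have "Q (\<lambda>y. f y + t * dl x y) = Q f + 2 * t * B (1/4) f (dl x) + t^2 * F (1/4) (dl x)"
      unfolding Q_F by (rule F_expand)
    then show ?thesis using Qg[of "\<lambda>y. f y + t * dl x y"] Qf by linarith
  qed
  then have "B (1/4) f (dl x) = 0" by (rule quad_zero)
  then have "d x * (Pm (Pm f) x - f x / 4) = 0" using B_dl[OF x] by (simp add: algebra_simps)
  then show False using d_pos[OF x] ne by simp
qed

lemma Pm_dl': "Pm (dl p) y = (if E y p then 1 else 0) / d y"
  unfolding Pm_def dl_def using fin_nb[of y] by (simp add: sum.delta nb_iff)

lemma Pm_diff: "Pm (\<lambda>z. f z - h z) y = Pm f y - Pm h y"
  unfolding Pm_def by (simp add: sum_subtractf diff_divide_distrib)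

lemma sumsq: "(\<Sum>y\<in>V. d y * (Pm f y)^2) = (\<Sum>y\<in>V. (d y * Pm f y)^2 / d y)"
  by (intro sum.cong refl) (simp add: power2_eq_square d_nz)

lemma sum_sub: "A \<subseteq> V \<Longrightarrow> (\<Sum>y\<in>V. if y \<in> A then g y else 0) = sum g A"
proof -
  assume A: "A \<subseteq> V"
  have "(\<Sum>y\<in>V. if y \<in> A then g y else 0) = sum g {y\<in>V. y \<in> A}"
    using finV by (simp add: sum.inter_filter)
  also have "{y\<in>V. y \<in> A} = A" using A by auto
  finally show ?thesis .
qed

lemma sum_inv3: "(\<And>y. y \<in> A \<Longrightarrow> d y \<ge> 3) \<Longrightarrow> (\<Sum>y\<in>A. 1 / d y) \<le> real (card A) / 3"
proof -
  assume h: "\<And>y. y \<in> A \<Longrightarrow> d y \<ge> 3"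
  have "(\<Sum>y\<in>A. 1 / d y) \<le> (\<Sum>y\<in>A. 1 / 3)"
  proof (intro sum_mono)
    fix y assume "y \<in> A"
    then show "1 / d y \<le> 1 / 3" using h[of y] by (intro divide_left_mono) auto
  qed
  then show ?thesis by simp
qed

lemma pairQ:
  assumes pq: "p \<in> V" "q \<in> V" "p \<noteq> q"
  shows "(\<Sum>y\<in>V. d y * (Pm (\<lambda>z. dl p z - dl q z) y)^2)
           = (\<Sum>y\<in>nbhd V E p - nbhd V E q. 1 / d y) + (\<Sum>y\<in>nbhd V E q - nbhd V E p. 1 / d y)"
    and "nrm (\<lambda>z. dl p z - dl q z) = d p + d q"
proof -
  have "(\<Sum>y\<in>V. d y * (Pm (\<lambda>z. dl p z - dl q z) y)^2)
      = (\<Sum>y\<in>V. (if y \<in> nbhd V E p - nbhd V E q then 1 / d y else 0)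
               + (if y \<in> nbhd V E q - nbhd V E p then 1 / d y else 0))"
  proof (intro sum.cong refl)
    fix y assume y: "y \<in> V"
    show "d y * (Pm (\<lambda>z. dl p z - dl q z) y)^2 = (if y \<in> nbhd V E p - nbhd V E q then 1 / d y else 0)
               + (if y \<in> nbhd V E q - nbhd V E p then 1 / d y else 0)"
      unfolding Pm_diff Pm_dl' using d_pos[OF y]
      by (auto simp: nb_iff power2_eq_square dest: Esym)
  qed
  also have "\<dots> = (\<Sum>y\<in>V. if y \<in> nbhd V E p - nbhd V E q then 1 / d y else 0)
               + (\<Sum>y\<in>V. if y \<in> nbhd V E q - nbhd V E p then 1 / d y else 0)"
    by (rule sum.distrib)
  also have "\<dots> = (\<Sum>y\<in>nbhd V E p - nbhd V E q. 1 / d y) + (\<Sum>y\<in>nbhd V E q - nbhd V E p. 1 / d y)"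
  proof -
    have s1: "nbhd V E p - nbhd V E q \<subseteq> V" and s2: "nbhd V E q - nbhd V E p \<subseteq> V"
      using nb_sub by blast+
    show ?thesis unfolding sum_sub[OF s1] sum_sub[OF s2] ..
  qed
  finally show "(\<Sum>y\<in>V. d y * (Pm (\<lambda>z. dl p z - dl q z) y)^2)
           = (\<Sum>y\<in>nbhd V E p - nbhd V E q. 1 / d y) + (\<Sum>y\<in>nbhd V E q - nbhd V E p. 1 / d y)" .
  have "nrm (\<lambda>z. dl p z - dl q z) = (\<Sum>y\<in>V. (if y = p then d p else 0) + (if y = q then d q else 0))"
    unfolding nrm_def dl_def using pq by (intro sum.cong refl) auto
  also have "\<dots> = d p + d q" using pq finV by (simp add: sum.distrib)
  finally show "nrm (\<lambda>z. dl p z - dl q z) = d p + d q" .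
qed

end
context G begin

lemma card_nb: "real (card (nbhd V E p)) = d p" unfolding d_def deg_def by simp

lemma card_diff_le:
  assumes "z \<in> nbhd V E p" and that: "z \<in> A"
  shows "real (card (nbhd V E p - A)) \<le> d p - 1"
proof -
  have "card (nbhd V E p - A) \<le> card (nbhd V E p - {z})"
    using that fin_nb by (intro card_mono) auto
  also have "\<dots> = card (nbhd V E p) - 1" using assms fin_nb by simp
  finally have "card (nbhd V E p - A) \<le> card (nbhd V E p) - 1" .
  moreover have "card (nbhd V E p) \<ge> 1" using assms fin_nb card_0_eq by fastforce
  ultimately show ?thesis using card_nb[of p] by linarith
qed

lemma caseB:
  assumes v: "v \<in> V" and w: "w \<in> V" and vw: "v \<noteq> w"
    and dv: "d v = 2" and dw: "d w = 2"
    and z: "z \<in> nbhd V E v" "z \<in> nbhd V E w"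
    and h3: "\<And>y. y \<in> nbhd V E v \<union> nbhd V E w \<Longrightarrow> d y \<ge> 3"
  shows "Q (\<lambda>y. dl v y - dl w y) < 0"
proof -
  have 1: "(\<Sum>y\<in>nbhd V E v - nbhd V E w. 1 / d y) \<le> real (card (nbhd V E v - nbhd V E w)) / 3"
    using h3 by (intro sum_inv3) auto
  have 2: "(\<Sum>y\<in>nbhd V E w - nbhd V E v. 1 / d y) \<le> real (card (nbhd V E w - nbhd V E v)) / 3"
    using h3 by (intro sum_inv3) auto
  have c1: "real (card (nbhd V E v - nbhd V E w)) \<le> d v - 1" by (rule card_diff_le[OF z(1) z(2)])
  have c2: "real (card (nbhd V E w - nbhd V E v)) \<le> d w - 1" by (rule card_diff_le[OF z(2) z(1)])
  have e1: "(\<Sum>y\<in>nbhd V E v - nbhd V E w. 1 / d y) \<le> (d v - 1) / 3"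
    by (rule order_trans[OF 1]) (use c1 in \<open>simp add: divide_right_mono\<close>)
  have e2: "(\<Sum>y\<in>nbhd V E w - nbhd V E v. 1 / d y) \<le> (d w - 1) / 3"
    by (rule order_trans[OF 2]) (use c2 in \<open>simp add: divide_right_mono\<close>)
  have "(\<Sum>y\<in>nbhd V E v - nbhd V E w. 1 / d y) + (\<Sum>y\<in>nbhd V E w - nbhd V E v. 1 / d y) - (d v + d w) / 4
      \<le> (d v - 1) / 3 + (d w - 1) / 3 - (d v + d w) / 4"
    using add_mono[OF e1 e2] by (rule diff_right_mono)
  also have "\<dots> < 0" using dv dw by simp
  finally show ?thesis unfolding Q_def pairQ[OF v w vw] .
qed

lemma caseC:
  assumes a: "a \<in> V" and b: "b \<in> V" and ab: "a \<noteq> b"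
    and da: "d a = 3" and s8: "d a + d b \<le> 8"
    and v: "v \<in> nbhd V E a" "v \<in> nbhd V E b"
    and h3: "\<And>y. y \<in> nbhd V E a \<union> nbhd V E b \<Longrightarrow> y \<noteq> v \<Longrightarrow> d y \<ge> 3"
  shows "\<exists>g. Q g < 0"
proof -
  define f where "f = (\<lambda>z. dl a z - dl b z)"
  have 1: "(\<Sum>y\<in>nbhd V E a - nbhd V E b. 1 / d y) \<le> real (card (nbhd V E a - nbhd V E b)) / 3"
    using h3 v by (intro sum_inv3) auto
  have 2: "(\<Sum>y\<in>nbhd V E b - nbhd V E a. 1 / d y) \<le> real (card (nbhd V E b - nbhd V E a)) / 3"
    using h3 v by (intro sum_inv3) auto
  have c1: "real (card (nbhd V E a - nbhd V E b)) \<le> d a - 1" by (rule card_diff_le[OF v(1) v(2)])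
  have c2: "real (card (nbhd V E b - nbhd V E a)) \<le> d b - 1" by (rule card_diff_le[OF v(2) v(1)])
  have e1: "(\<Sum>y\<in>nbhd V E a - nbhd V E b. 1 / d y) \<le> (d a - 1) / 3"
    by (rule order_trans[OF 1]) (use c1 in \<open>simp add: divide_right_mono\<close>)
  have e2: "(\<Sum>y\<in>nbhd V E b - nbhd V E a. 1 / d y) \<le> (d b - 1) / 3"
    by (rule order_trans[OF 2]) (use c2 in \<open>simp add: divide_right_mono\<close>)
  have "(\<Sum>y\<in>nbhd V E a - nbhd V E b. 1 / d y) + (\<Sum>y\<in>nbhd V E b - nbhd V E a. 1 / d y) - (d a + d b) / 4
      \<le> (d a - 1) / 3 + (d b - 1) / 3 - (d a + d b) / 4"
    using add_mono[OF e1 e2] by (rule diff_right_mono)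
  also have "\<dots> \<le> 0" using s8 by (simp add: field_simps)
  finally have Qf: "Q f \<le> 0" unfolding Q_def f_def pairQ[OF a b ab] .
  have "(\<Sum>y\<in>nbhd V E a. Pm f y) = (\<Sum>y\<in>nbhd V E a. if y \<notin> nbhd V E b then 1 / d y else 0)"
  proof (intro sum.cong refl)
    fix y assume y: "y \<in> nbhd V E a"
    then have "E y a" by (simp add: nb_iff Esym)
    then show "Pm f y = (if y \<notin> nbhd V E b then 1 / d y else 0)"
      unfolding f_def Pm_diff Pm_dl' by (auto simp: nb_iff dest: Esym)
  qed
  also have "\<dots> = (\<Sum>y\<in>nbhd V E a - nbhd V E b. 1 / d y)"
    using fin_nb[of a] by (simp add: sum.inter_filter[symmetric] set_diff_eq)
  finally have "d a * Pm (Pm f) a \<le> 2 / 3" using dPm[OF a, of "Pm f"] 1 c1 da by linarith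
  then have "Pm (Pm f) a \<le> 2 / 9" using da by simp
  moreover have "f a = 1" unfolding f_def dl_def using ab by simp
  ultimately have "Pm (Pm f) a \<noteq> f a / 4" by simp
  then show ?thesis by (rule perturb[OF Qf a])
qed

lemma caseA:
  assumes v: "v \<in> V" and Nv: "nbhd V E v = {a, b}" and ab: "a \<noteq> b"
    and small: "1 / d a + 1 / d b \<le> 1 / 2"
    and x: "x \<in> nbhd V E a" "x \<noteq> v"
  shows "\<exists>g. Q g < 0"
proof -
  have "(\<Sum>y\<in>V. d y * (Pm (dl v) y)^2) = (\<Sum>y\<in>V. if y \<in> nbhd V E v then 1 / d y else 0)"
  proof (intro sum.cong refl)
    fix y assume y: "y \<in> V"
    show "d y * (Pm (dl v) y)^2 = (if y \<in> nbhd V E v then 1 / d y else 0)"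
      unfolding Pm_dl' using d_pos[OF y] by (auto simp: nb_iff power2_eq_square dest: Esym)
  qed
  also have "\<dots> = (\<Sum>y\<in>nbhd V E v. 1 / d y)" using nb_sub by (simp add: sum_sub)
  also have "\<dots> = 1 / d a + 1 / d b" unfolding Nv using ab by simp
  finally have s: "(\<Sum>y\<in>V. d y * (Pm (dl v) y)^2) = 1 / d a + 1 / d b" .
  have "nrm (dl v) = (\<Sum>y\<in>V. d y * dl v y * dl v y)" unfolding nrm_def by (simp add: power2_eq_square mult.assoc)
  also have "\<dots> = d v" using sum_dl[OF v, of "dl v"] by (simp add: dl_def)
  finally have "nrm (dl v) = d v" .
  moreover have "d v = 2" using card_nb[of v] Nv ab by simp
  ultimately have Qf: "Q (dl v) \<le> 0" unfolding Q_def s using small by simp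
  have a: "a \<in> nbhd V E v" using Nv by simp
  then have Eav: "E a v" by (simp add: nb_iff Esym)
  have xV: "x \<in> V" using x nb_sub by blast
  have ax: "a \<in> nbhd V E x" using x by (simp add: nb_iff Esym)
  have aV: "a \<in> V" using a nb_sub by blast
  have "0 < (\<Sum>y\<in>nbhd V E x. Pm (dl v) y)"
  proof (rule sum_pos2[OF fin_nb ax])
    show "0 < Pm (dl v) a" unfolding Pm_dl' using Eav d_pos[OF aV] by simp
    show "\<And>y. y \<in> nbhd V E x \<Longrightarrow> 0 \<le> Pm (dl v) y"
      unfolding Pm_dl' using nb_sub d_pos by (auto intro: less_imp_le)
  qed
  then have "d x * Pm (Pm (dl v)) x > 0" using dPm[OF xV] by simp
  then have "Pm (Pm (dl v)) x \<noteq> 0" by auto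
  moreover have "dl v x = 0" unfolding dl_def using x by simp
  ultimately have "Pm (Pm (dl v)) x \<noteq> dl v x / 4" by simp
  then show ?thesis by (rule perturb[OF Qf xV])
qed

end
lemma inv_le_aux: "(k::real) > 0 \<Longrightarrow> k \<le> x \<Longrightarrow> 1 / x \<le> 1 / k"
  by (simp add: frac_le)

theorem mainTheorem9:
  fixes V :: "'a set" and E :: "'a \<Rightarrow> 'a \<Rightarrow> bool"
  assumes "simple_graph V E"
    and "connected_graph V E"
    and "card V \<ge> 3"
    and "min_degree V E = 2"
    and "eps_gap V E = 1 / 2"
  shows "\<exists>u\<in>V. \<exists>v\<in>V. E u v \<and> deg V E u = 2 \<and> deg V E v = 2"
proof (rule ccontr)
  assume H: "\<not> (\<exists>u\<in>V. \<exists>v\<in>V. E u v \<and> deg V E u = 2 \<and> deg V E v = 2)"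
  have fin: "finite V" using assms(1) unfolding simple_graph_def by auto
  have ne: "V \<noteq> {}" using assms(3) by auto
  have ge2: "deg V E x \<ge> 2" if "x \<in> V" for x
  proof -
    have "Min (deg V E ` V) \<le> deg V E x" using fin that by (intro Min_le) auto
    then show ?thesis using assms(4) unfolding min_degree_def by simp
  qed
  have "Min (deg V E ` V) \<in> deg V E ` V" using fin ne by (intro Min_in) auto
  then obtain v where v: "v \<in> V" "deg V E v = 2" using assms(4) unfolding min_degree_def by auto
  interpret G V E
  proof
    show "simple_graph V E" by (rule assms(1))
    fix x assume "x \<in> V" then show "deg V E x > 0" using ge2[of x] by simp
  qed
  have nb3: "d y \<ge> 3" if u: "u \<in> V" "deg V E u = 2" "E u y" for u y
  proof -
    have y: "y \<in> V" using Ein[OF u(3)] by simp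
    have "deg V E y \<noteq> 2" using H u y by blast
    then have "deg V E y \<ge> 3" using ge2[OF y] by simp
    then show ?thesis unfolding d_def by simp
  qed
  have "card (nbhd V E v) = 2" using v unfolding deg_def by simp
  then obtain a b where ab: "a \<noteq> b" and Nv: "nbhd V E v = {a, b}" by (auto simp: card_2_iff)
  have Ea: "E v a" and Eb: "E v b" using Nv nb_iff by auto
  have aV: "a \<in> V" and bV: "b \<in> V" using Ea Eb Ein by auto
  have dv: "d v = 2" using v unfolding d_def by simp
  have "\<exists>g. Q g < 0"
  proof (cases "\<exists>w\<in>V. w \<noteq> v \<and> deg V E w = 2 \<and> (E w a \<or> E w b)")
    case True
    then obtain w where w: "w \<in> V" "w \<noteq> v" "deg V E w = 2" "E w a \<or> E w b" by blast
    define z where "z = (if E w a then a else b)"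
    have z: "z \<in> nbhd V E v" "z \<in> nbhd V E w" using w(4) Nv unfolding z_def by (auto simp: nb_iff)
    have dw: "d w = 2" using w unfolding d_def by simp
    have h3: "d y \<ge> 3" if "y \<in> nbhd V E v \<union> nbhd V E w" for y
      using that nb3[OF v] nb3[OF w(1) w(3)] by (auto simp: nb_iff)
    show ?thesis using caseB[OF v(1) w(1) w(2)[symmetric] dv dw z h3] by blast
  next
    case False
    have h: "d y \<ge> 3" if "E a y \<or> E b y" "y \<noteq> v" for y
    proof -
      have y: "y \<in> V" using that Ein by blast
      have "deg V E y \<noteq> 2" using False that y Esym by blast
      then have "deg V E y \<ge> 3" using ge2[OF y] by simp
      then show ?thesis unfolding d_def by simp
    qed
    have da3: "d a \<ge> 3" and db3: "d b \<ge> 3" using nb3[OF v Ea] nb3[OF v Eb] .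
    show ?thesis
    proof (cases "1 / d a + 1 / d b \<le> 1 / 2")
      case True
      have "card (nbhd V E a) \<ge> 3" using da3 card_nb[of a] by linarith
      then have "\<not> nbhd V E a \<subseteq> {v}" using card_mono[of "{v}" "nbhd V E a"] by auto
      then obtain x where x: "x \<in> nbhd V E a" "x \<noteq> v" by blast
      show ?thesis by (rule caseA[OF v(1) Nv ab True x])
    next
      case False
      have va: "v \<in> nbhd V E a" and vb: "v \<in> nbhd V E b" using Ea Eb by (auto simp: nb_iff Esym)
      have h3: "d y \<ge> 3" if "y \<in> nbhd V E a \<union> nbhd V E b" "y \<noteq> v" for y
        using that h by (auto simp: nb_iff)
      have dint: "d a = real (deg V E a)" "d b = real (deg V E b)" unfolding d_def by auto
      have cases: "(d a = 3 \<and> d a + d b \<le> 8) \<or> (d b = 3 \<and> d b + d a \<le> 8)"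
      proof (rule ccontr)
        assume nc: "\<not> ?thesis"
        have A3: "deg V E a \<ge> 3" "deg V E b \<ge> 3" using da3 db3 dint by linarith+
        have "(deg V E a \<ge> 4 \<and> deg V E b \<ge> 4) \<or> (deg V E a \<ge> 6) \<or> (deg V E b \<ge> 6)"
        proof -
          have "\<not> (deg V E a = 3 \<and> deg V E b \<le> 5)" using nc dint by auto
          moreover have "\<not> (deg V E b = 3 \<and> deg V E a \<le> 5)" using nc dint by auto
          ultimately show ?thesis using A3 by linarith
        qed
        then have "1 / d a + 1 / d b \<le> 1 / 2"
        proof (elim disjE conjE)
          assume "deg V E a \<ge> 4" "deg V E b \<ge> 4"
          then have "1 / d a \<le> 1 / 4" "1 / d b \<le> 1 / 4" using dint by (auto intro!: inv_le_aux)
          then show ?thesis by linarith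
        next
          assume "deg V E a \<ge> 6"
          then have "1 / d a \<le> 1 / 6" "1 / d b \<le> 1 / 3" using dint db3 by (auto intro!: inv_le_aux)
          then show ?thesis by linarith
        next
          assume "deg V E b \<ge> 6"
          then have "1 / d b \<le> 1 / 6" "1 / d a \<le> 1 / 3" using dint da3 by (auto intro!: inv_le_aux)
          then show ?thesis by linarith
        qed
        then show False using False by simp
      qed
      then show ?thesis
      proof
        assume "d a = 3 \<and> d a + d b \<le> 8"
        then show ?thesis using caseC[OF aV bV ab _ _ va vb h3] by blast
      next
        assume "d b = 3 \<and> d b + d a \<le> 8"
        moreover have "\<And>y. y \<in> nbhd V E b \<union> nbhd V E a \<Longrightarrow> y \<noteq> v \<Longrightarrow> d y \<ge> 3" using h3 by blast
        ultimately show ?thesis using caseC[OF bV aV ab[symmetric] _ _ vb va] by blast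
      qed
    qed
  qed
  then obtain g where "Q g < 0" by blast
  then obtain \<mu> where mu: "\<mu> \<in> laplacian_eigenvalues V E" "\<bar>1 - \<mu>\<bar> < 1/2"
    using exists_small_eig by blast
  have "eps_gap V E \<le> \<bar>1 - \<mu>\<bar>" unfolding eps_gap_def
    using eig_finite mu(1) by (intro Min_le) auto
  then show False using mu(2) assms(5) by simp
qed

end
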